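(* Let $0<q<1$ and $w,\nu\in\mathbb{C}$ with $q^{-\nu}\notin q^{\mathbb{Z}_+}$ (i.e. $q^{\nu+k}\ne1$ for all $k\in\mathbb{Z}_+$). Then \[ \mathfrak{F}\!\left(\left\{\frac{w}{q^{-(\nu+k)/2}-q^{(\nu+k)/2}}\right\}_{k=0}^\infty\right)={}_0\phi_1(;q^\nu;q,-q^{\nu+1/2}w^2). \]
   Context: Complex powers of $q$ are $q^s=e^{s\log q}$. $(a;q)_k=\prod_{j=0}^{k-1}(1-aq^j)$ and ${}_0\phi_1(;b;q,z)=\sum_{k=0}^\infty\frac{q^{k(k-1)}}{(q;q)_k(b;q)_k}z^k$. For a complex sequence $x=\{x_k\}_{k=0}^{\infty}$ with $\sum_{k\ge0}|x_kx_{k+1}|<\infty$, \[ \mathfrak{F}(x)=1+\sum_{m=1}^\infty(-1)^m\sum_{k_1=0}^\infty\ \sum_{k_2=k_1+2}^\infty\cdots\sum_{k_m=k_{m-1}+2}^\infty x_{k_1}x_{k_1+1}\cdots x_{k_m}x_{k_m+1}. \] *)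

theory Defs
  imports "HOL-Analysis.Analysis"
begin

definition qpow :: "real \<Rightarrow> complex \<Rightarrow> complex" where
  "qpow q s = exp (s * complex_of_real (ln q))"

definition qpoch :: "complex \<Rightarrow> complex \<Rightarrow> nat \<Rightarrow> complex" where
  "qpoch a q k = (\<Prod>j<k. 1 - a * q ^ j)"

definition phi01 :: "complex \<Rightarrow> real \<Rightarrow> complex \<Rightarrow> complex" where
  "phi01 b q z = (\<Sum>k. complex_of_real (q ^ (k * (k - 1))) /
      (qpoch (of_real q) (of_real q) k * qpoch b (of_real q) k) * z ^ k)"

definition adm_idx :: "nat \<Rightarrow> nat list set" where
  "adm_idx m = {ks. length ks = m \<and> (\<forall>i. Suc i < length ks \<longrightarrow> ks ! i + 2 \<le> ks ! Suc i)}"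

definition frakF :: "(nat \<Rightarrow> complex) \<Rightarrow> complex" where
  "frakF x = 1 + (\<Sum>m. (-1) ^ Suc m *
      infsum (\<lambda>ks. \<Prod>k\<leftarrow>ks. x k * x (Suc k)) (adm_idx (Suc m)))"

end

theory Submission
  imports Defs
begin


fun gp :: "nat list \<Rightarrow> bool" where
  "gp [] = True" | "gp [k] = True" | "gp (k#l#ks) = (k+2 \<le> l \<and> gp (l#ks))"

lemma gp_iff: "(\<forall>i. Suc i < length ks \<longrightarrow> ks ! i + 2 \<le> ks ! Suc i) \<longleftrightarrow> gp ks"
proof (induction ks rule: gp.induct)
  case (3 k l ks)
  show ?case
  proof
    assume H: "\<forall>i. Suc i < length (k # l # ks) \<longrightarrow> (k # l # ks) ! i + 2 \<le> (k # l # ks) ! Suc i"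
    have "k + 2 \<le> l" using H[rule_format, of 0] by simp
    moreover have "\<forall>i. Suc i < length (l # ks) \<longrightarrow> (l # ks) ! i + 2 \<le> (l # ks) ! Suc i"
      using H by (metis Suc_less_eq length_Cons nth_Cons_Suc)
    ultimately show "gp (k # l # ks)" using 3 by simp
  next
    assume "gp (k # l # ks)"
    then have a: "k+2 \<le> l" and b: "\<forall>i. Suc i < length (l # ks) \<longrightarrow> (l # ks) ! i + 2 \<le> (l # ks) ! Suc i"
      using 3 by auto
    show "\<forall>i. Suc i < length (k # l # ks) \<longrightarrow> (k # l # ks) ! i + 2 \<le> (k # l # ks) ! Suc i"
    proof (intro allI impI)
      fix i assume "Suc i < length (k # l # ks)"
      then show "(k # l # ks) ! i + 2 \<le> (k # l # ks) ! Suc i"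
        using a b by (cases i) auto
    qed
  qed
qed auto

lemma gp_hd0: "gp (k#ks) \<Longrightarrow> \<forall>x\<in>set ks. k + 2 \<le> x"
proof (induction ks arbitrary: k)
  case (Cons l ks)
  then have "k+2 \<le> l" "gp (l#ks)" by auto
  with Cons.IH[of l] show ?case by fastforce
qed auto

lemma gp_hd: "gp (k#ks) \<Longrightarrow> x \<in> set ks \<Longrightarrow> k + 2 \<le> x"
  using gp_hd0 by blast

lemma gp_Cons: "gp (k#ks) \<longleftrightarrow> gp ks \<and> (\<forall>x\<in>set ks. k+2 \<le> x)"
  by (cases ks) (auto dest: gp_hd)

fun L :: "nat \<Rightarrow> nat \<Rightarrow> nat list set" where
  "L 0 n = {[]}"
| "L (Suc m) n = (\<lambda>(j,ks). (n+j)#ks) ` (SIGMA j:UNIV. L m (n+j+2))"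

lemma L_char: "ks \<in> L m n \<longleftrightarrow> length ks = m \<and> gp ks \<and> (\<forall>k\<in>set ks. n \<le> k)"
proof (induction m arbitrary: n ks)
  case 0 then show ?case by auto
next
  case (Suc m)
  show ?case
  proof
    assume "ks \<in> L (Suc m) n"
    then obtain j ks' where "ks = (n+j)#ks'" "ks' \<in> L m (n+j+2)" by auto
    then show "length ks = Suc m \<and> gp ks \<and> (\<forall>k\<in>set ks. n \<le> k)"
      using Suc.IH[where n="n+j+2" and ks=ks'] by (auto simp: gp_Cons)
  next
    assume H: "length ks = Suc m \<and> gp ks \<and> (\<forall>k\<in>set ks. n \<le> k)"
    then obtain k ks' where ks: "ks = k#ks'" by (cases ks) auto
    with H have "ks' \<in> L m (n+(k-n)+2)" "n \<le> k" using Suc.IH[where n="n+(k-n)+2" and ks=ks'] by (auto simp: gp_Cons)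
    then show "ks \<in> L (Suc m) n" unfolding ks by (auto intro!: image_eqI[where x="(k-n, ks')"])
  qed
qed

lemma adm_L: "adm_idx m = L m 0"
  unfolding adm_idx_def using L_char gp_iff by auto

lemma L_mono: "n \<le> n' \<Longrightarrow> L m n' \<subseteq> L m n"
  using L_char by fastforce

lemma L_inj: "inj_on (\<lambda>(j::nat,ks). (n+j)#ks) A"
  by (auto simp: inj_on_def)




definition cc :: "complex \<Rightarrow> complex \<Rightarrow> complex \<Rightarrow> nat \<Rightarrow> complex" where
  "cc Q b B k = B*Q^k/((1-b*Q^k)*(1-b*Q^(Suc k)))"
definition GG :: "complex \<Rightarrow> complex \<Rightarrow> complex \<Rightarrow> nat \<Rightarrow> nat \<Rightarrow> complex" where
  "GG Q b B m n = Q^(m*(m-1)) * (Q^n*B)^m / (qpoch Q Q m * qpoch (b*Q^n) Q m)"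

lemma qpoch_Suc: "qpoch a Q (Suc m) = qpoch a Q m * (1 - a*Q^m)"
  by (simp add: qpoch_def)
lemma qpoch_Suc': "qpoch a Q (Suc m) = (1 - a) * qpoch (a*Q) Q m"
  unfolding qpoch_def by (subst prod.lessThan_Suc_shift) (simp add: mult.assoc)

lemma key_alg:
  fixes B Bm V X Y Z Q a D E P0 :: complex
  assumes "1-a \<noteq> 0" "1-a*Q \<noteq> 0" "D \<noteq> 0" "E \<noteq> 0" "P0 \<noteq> 0" "1-Q*Y \<noteq> 0" "1-a*Q*Y \<noteq> 0"
    and rel: "(1-a*Q)*E = D*(1-a*Q*Y)"
  shows "B*X/((1-a)*(1-a*Q)) * (Z*(V*Y^2*Bm)/(P0*E))
       = B*Bm*Z*Y^2/(P0*(1-Q*Y)) * (V*X/((1-a)*D) - V*X*Y*Q/(D*(1-a*Q*Y)))"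
proof -
  have E: "E = D*(1-a*Q*Y)/(1-a*Q)" using rel assms by (simp add: field_simps)
  have br: "V*X/((1-a)*D) - V*X*Y*Q/(D*(1-a*Q*Y)) = V*X*(1-Q*Y)/((1-a)*D*(1-a*Q*Y))"
    using assms by (simp add: divide_simps) (simp add: algebra_simps)
  show ?thesis unfolding E br using assms by (simp add: divide_simps)
qed

context
  fixes q :: real and b B :: complex
  assumes q0: "0<q" and q1: "q<1" and bq: "\<And>j. b * of_real q ^ j \<noteq> 1"
begin

lemma Qpow_ne1: "(complex_of_real q) ^ Suc j \<noteq> 1"
proof
  assume "complex_of_real q ^ Suc j = 1"
  then have "norm (complex_of_real q ^ Suc j) = 1" by simp
  moreover have "q ^ Suc j < 1" using q0 q1 by (rule power_Suc_less_one)
  moreover have "norm (complex_of_real q ^ Suc j) = q ^ Suc j" using q0 by (simp add: norm_power del: power_Suc)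
  ultimately show False by simp
qed

lemma qpoch_b_nz: "qpoch (b * of_real q ^ n) (of_real q) m \<noteq> 0"
  unfolding qpoch_def using bq[of "n+_"] by (auto simp: power_add mult.assoc)

lemma qpoch_Q_nz: "qpoch (of_real q) (of_real q) m \<noteq> (0::complex)"
  unfolding qpoch_def using Qpow_ne1 by (auto simp: mult.commute)

abbreviation QQ :: complex where "QQ \<equiv> complex_of_real q"

lemma cc_GG_tele:
  "cc QQ b B k * GG QQ b B m (k+2) =
     (B^(Suc m) * QQ^(m*(m-1)+2*m)/(qpoch QQ QQ m * (1-QQ^(Suc m)))) *
     (QQ^(k*(m+1))/qpoch (b*QQ^k) QQ (Suc m) - QQ^(Suc k*(m+1))/qpoch (b*QQ^Suc k) QQ (Suc m))"
proof -
  define a where "a = b*QQ^k"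
  define X where "X = QQ^k"
  define Y where "Y = QQ^m"
  define V where "V = QQ^(k*m)"
  define Z where "Z = QQ^(m*(m-1))"
  define Bm where "Bm = B^m"
  define D where "D = qpoch (a*QQ) QQ m"
  define E where "E = qpoch (a*QQ*QQ) QQ m"
  define P0 where "P0 = qpoch QQ QQ m"
  have aQ: "b*QQ^Suc k = a*QQ" "b*QQ^(k+2) = a*QQ*QQ" "b*QQ^(Suc k + m) = a*QQ*Y"
    by (simp_all add: a_def Y_def power_add mult_ac)
  have nz: "1-a \<noteq> 0" "1-a*QQ \<noteq> 0" "D \<noteq> 0" "E \<noteq> 0" "P0 \<noteq> 0" "1-QQ*Y \<noteq> 0" "1-a*QQ*Y \<noteq> 0"
    using bq[of k] bq[of "Suc k"] bq[of "Suc k + m"] qpoch_b_nz[of "Suc k" m] qpoch_b_nz[of "k+2" m]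
      qpoch_Q_nz[of m] Qpow_ne1[of m]
    by (auto simp: a_def D_def E_def P0_def Y_def aQ[symmetric] mult_ac power_add)
  have rel: "(1-a*QQ)*E = D*(1-a*QQ*Y)"
    using qpoch_Suc'[of "a*QQ" QQ m] qpoch_Suc[of "a*QQ" QQ m]
    by (simp add: D_def E_def Y_def mult_ac)
  have l1: "cc QQ b B k = B*X/((1-a)*(1-a*QQ))"
    unfolding cc_def using aQ(1) by (simp add: a_def X_def)
  have pw: "(QQ^(k+2)*B)^m = V*Y^2*Bm"
  proof -
    have "QQ^(k+2) = QQ^k * QQ * QQ" by (simp add: power_add power2_eq_square)
    then have "(QQ^(k+2))^m = (QQ^k)^m * QQ^m * QQ^m" by (simp add: power_mult_distrib)
    then show ?thesis unfolding V_def Y_def Bm_def power_mult_distrib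
      by (simp add: power_mult[symmetric] mult.commute power2_eq_square)
  qed
  have l2: "GG QQ b B m (k+2) = Z*(V*Y^2*Bm)/(P0*E)"
    unfolding GG_def aQ(2) pw by (simp add: Z_def P0_def E_def)
  have l3: "QQ^(k*(m+1))/qpoch (b*QQ^k) QQ (Suc m) = V*X/((1-a)*D)"
    by (simp add: qpoch_Suc' V_def X_def a_def D_def power_add mult_ac)
  have l4: "QQ^(Suc k*(m+1))/qpoch (b*QQ^Suc k) QQ (Suc m) = V*X*Y*QQ/(D*(1-a*QQ*Y))"
    unfolding aQ(1) by (simp add: qpoch_Suc V_def X_def Y_def D_def power_add mult_ac)
  have l5: "B^(Suc m) * QQ^(m*(m-1)+2*m)/(qpoch QQ QQ m * (1-QQ^(Suc m))) = B*Bm*Z*Y^2/(P0*(1-QQ*Y))"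
    by (simp add: Bm_def Z_def Y_def P0_def power_add power_mult[symmetric] mult_ac)
  show ?thesis unfolding l1 l2 l3 l4 l5 by (rule key_alg[OF nz rel])
qed

lemma normQ: "norm (QQ ^ Suc m) < 1"
  using q0 q1 by (simp add: norm_power power_Suc_less_one del: power_Suc)

lemma u_lim: "(\<lambda>k. QQ^(k*(m+1))/qpoch (b*QQ^k) QQ (Suc m)) \<longlonglongrightarrow> 0"
proof -
  have "(\<lambda>k. (QQ^Suc m)^k) \<longlonglongrightarrow> 0" by (rule LIMSEQ_power_zero[OF normQ])
  moreover have "(\<lambda>k. QQ^(k*(m+1))) = (\<lambda>k. (QQ^Suc m)^k)"
    by (rule ext) (metis power_mult mult.commute Suc_eq_plus1)
  ultimately have a: "(\<lambda>k. QQ^(k*(m+1))) \<longlonglongrightarrow> 0" by simp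
  have "(\<lambda>k. QQ^k) \<longlonglongrightarrow> 0" using q0 q1 by (intro LIMSEQ_power_zero) simp
  then have "(\<lambda>k. qpoch (b*QQ^k) QQ (Suc m)) \<longlonglongrightarrow> (\<Prod>j<Suc m. 1 - 0)"
    unfolding qpoch_def by (intro tendsto_prod tendsto_diff tendsto_const) (auto intro!: tendsto_mult_left_zero tendsto_mult_right_zero)
  then have b: "(\<lambda>k. qpoch (b*QQ^k) QQ (Suc m)) \<longlonglongrightarrow> 1" by simp
  show ?thesis using tendsto_divide[OF a b] by simp
qed

lemma GG_sums: "(\<lambda>j. cc QQ b B (n+j) * GG QQ b B m (n+j+2)) sums GG QQ b B (Suc m) n"
proof -
  define u where "u = (\<lambda>k. QQ^(k*(m+1))/qpoch (b*QQ^k) QQ (Suc m))"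
  define K where "K = B^(Suc m) * QQ^(m*(m-1)+2*m)/(qpoch QQ QQ m * (1-QQ^(Suc m)))"
  have eq: "cc QQ b B (n+j) * GG QQ b B m (n+j+2) = K * (u (n+j) - u (Suc (n+j)))" for j
    using cc_GG_tele[of "n+j" m] unfolding u_def K_def by simp
  have "(\<lambda>j. u (j+n)) \<longlonglongrightarrow> 0" using LIMSEQ_ignore_initial_segment[OF u_lim[of m]] unfolding u_def .
  then have "(\<lambda>j. u (n+j) - u (n + Suc j)) sums (u (n+0) - 0)"
    using telescope_sums'[of "\<lambda>j. u (n+j)" 0] by (simp add: add.commute)
  then have "(\<lambda>j. K * (u (n+j) - u (Suc (n+j)))) sums (K * u n)"
    by (intro sums_mult) simp
  moreover have "K * u n = GG QQ b B (Suc m) n"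
  proof -
    have e: "m*(m-1)+2*m = Suc m * m" by (cases m) auto
    have "(QQ^n*B)^Suc m = QQ^(n*(m+1)) * B^Suc m"
      by (simp add: power_mult_distrib power_mult[symmetric] del: power_Suc)
    moreover have qs: "qpoch QQ QQ (Suc m) = qpoch QQ QQ m * (1 - QQ^Suc m)" by (simp add: qpoch_Suc)
    ultimately show ?thesis
      unfolding K_def u_def GG_def e qs
      by (simp add: field_simps power_mult[symmetric] del: power_Suc)
  qed
  ultimately show ?thesis unfolding eq by simp
qed

lemma cc_summable: "summable (\<lambda>k. norm (cc QQ b B k))"
proof -
  have z: "(\<lambda>k. QQ^k) \<longlonglongrightarrow> 0" using q0 q1 by (intro LIMSEQ_power_zero) simp
  have "(\<lambda>k. B/((1 - b*QQ^k)*(1-b*QQ^Suc k))) \<longlonglongrightarrow> B/((1-b*0)*(1-b*0))"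
    by (intro tendsto_intros z LIMSEQ_Suc[OF z]) simp
  then have "Bseq (\<lambda>k. B/((1 - b*QQ^k)*(1-b*QQ^Suc k)))"
    using convergent_imp_Bseq convergentI by blast
  then obtain M where M: "M > 0" "\<And>k. norm (B/((1 - b*QQ^k)*(1-b*QQ^Suc k))) \<le> M"
    by (auto elim!: BseqE)
  have bnd: "norm (cc QQ b B k) \<le> M * q^k" for k
  proof -
    have "norm (cc QQ b B k) = norm (B/((1 - b*QQ^k)*(1-b*QQ^Suc k))) * q^k"
      unfolding cc_def using q0 by (simp add: norm_mult norm_divide norm_power del: power_Suc)
    also have "\<dots> \<le> M * q^k" using M(2)[of k] q0 by (intro mult_right_mono) auto
    finally show ?thesis .
  qed
  have sg: "summable (\<lambda>k. M * q^k)" using q0 q1 by (intro summable_mult summable_geometric) simp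
  show ?thesis
  proof (rule summable_comparison_test'[where g="\<lambda>k. M*q^k" and N=0])
    show "summable (\<lambda>k. M*q^k)" by (rule sg)
    fix k show "norm (norm (cc QQ b B k)) \<le> M*q^k" using bnd[of k] by simp
  qed
qed


end


context
  fixes q :: real and b B :: complex
  assumes q0: "0<q" and q1: "q<1" and bq: "\<And>j. b * of_real q ^ j \<noteq> 1"
begin
abbreviation QQ' :: complex where "QQ' \<equiv> complex_of_real q"
lemma main_ind:
  "((\<lambda>ks. prod_list (map (cc QQ' b B) ks)) has_sum GG QQ' b B m n) (L m n) \<and>
   (\<lambda>ks. norm (prod_list (map (cc QQ' b B) ks))) summable_on L m n"
proof (induction m arbitrary: n)
  case 0
  show ?case using has_sum_finite[of "{[]}" "\<lambda>ks. prod_list (map (cc QQ' b B) ks)"] by (simp add: GG_def qpoch_def)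
next
  case (Suc m)
  define c where "c = cc QQ' b B"
  define P where "P = (\<lambda>ks. prod_list (map c ks))"
  define g where "g = (\<lambda>(j,ks). (n+j)#(ks::nat list))"
  define S where "S = (SIGMA j:UNIV. L m (n+j+2))"
  define f where "f = (\<lambda>(j,ks). c (n+j) * P ks)"
  have IH1: "\<And>n. (P has_sum GG QQ' b B m n) (L m n)" and IH2: "\<And>n. (\<lambda>ks. norm (P ks)) summable_on L m n"
    using Suc.IH unfolding P_def c_def by auto
  define C where "C = infsum (\<lambda>ks. norm (P ks)) (L m 0)"
  have fb: "infsum (\<lambda>ks. norm (P ks)) (L m k) \<le> C" for k
    unfolding C_def by (rule infsum_mono2[OF IH2 IH2 L_mono]) auto
  have fPg: "P \<circ> g = f" by (auto simp: P_def g_def f_def)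
  have csum: "summable (\<lambda>j. norm (c (n+j)))"
    using summable_ignore_initial_segment[OF cc_summable[OF q0 q1 bq, where B=B], of n] unfolding c_def by (simp add: add.commute)
  have fib_abs: "(\<lambda>ks. norm (f (j, ks))) summable_on L m (n+j+2)" for j
    unfolding f_def by (simp add: norm_mult summable_on_cmult_right[OF IH2])
  have fibval: "infsum (\<lambda>ks. norm (f (j, ks))) (L m (n+j+2)) = norm (c (n+j)) * infsum (\<lambda>ks. norm (P ks)) (L m (n+j+2))" for j
    unfolding f_def by (simp add: norm_mult infsum_cmult_right')
  have C0: "0 \<le> C" unfolding C_def by (simp add: infsum_nonneg)
  have outer: "(\<lambda>j. norm (infsum (\<lambda>ks. norm (f (j, ks))) (L m (n+j+2)))) summable_on UNIV"
  proof (rule Infinite_Sum.abs_summable_on_comparison_test)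
    show "(\<lambda>j. norm (norm (c (n+j)) * C)) summable_on UNIV"
      using summable_nonneg_imp_summable_on[OF summable_mult2[OF csum, of C]] fb[of 0]
      using C0 by (simp add: abs_mult infsum_nonneg)
    fix j
    have "0 \<le> C" unfolding C_def by (simp add: infsum_nonneg)
    moreover have "0 \<le> infsum (\<lambda>ks. norm (P ks)) (L m (n+j+2))" by (simp add: infsum_nonneg)
    ultimately show "norm (infsum (\<lambda>ks. norm (f (j, ks))) (L m (n+j+2))) \<le> norm (norm (c (n+j)) * C)"
      unfolding fibval using fb[of "n+j+2"] by (simp add: abs_mult mult_left_mono)
  qed
  have fabs: "(\<lambda>x. norm (f x)) summable_on S"
    unfolding S_def using fib_abs outer by (subst Infinite_Sum.abs_summable_on_Sigma_iff) simp
  have img: "L (Suc m) n = g ` S" by (simp add: g_def S_def)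
  have inj: "inj_on g S" unfolding g_def by (rule L_inj)
  have "(\<lambda>ks. norm (norm (P ks))) summable_on L (Suc m) n"
    unfolding img summable_on_reindex[OF inj]
    using fabs by (simp add: o_def fPg[symmetric])
  then have A2: "(\<lambda>ks. norm (P ks)) summable_on L (Suc m) n" by simp
  have fhas: "(f has_sum infsum f S) S" using abs_summable_summable[OF fabs] by (rule has_sum_infsum)
  have "((\<lambda>j. c (n+j) * GG QQ' b B m (n+j+2)) has_sum infsum f S) UNIV"
  proof (rule has_sum_SigmaD)
    show "(f has_sum infsum f S) (Sigma UNIV (\<lambda>j. L m (n+j+2)))" using fhas unfolding S_def .
    fix j
    show "((\<lambda>ks. f (j, ks)) has_sum c (n+j) * GG QQ' b B m (n+j+2)) (L m (n+j+2))"
      unfolding f_def by (simp add: has_sum_cmult_right[OF IH1])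
  qed
  then have "(\<lambda>j. c (n+j) * GG QQ' b B m (n+j+2)) sums infsum f S" by (rule has_sum_imp_sums)
  then have val: "infsum f S = GG QQ' b B (Suc m) n"
    using GG_sums[OF q0 q1 bq, where B=B and n=n and m=m] unfolding c_def by (rule sums_unique2)
  have "(P has_sum GG QQ' b B (Suc m) n) (L (Suc m) n)"
    unfolding img has_sum_reindex[OF inj] fPg using fhas val by simp
  then show ?case using A2 unfolding P_def c_def by simp
qed

end



lemma qpow_add_nat: "0 < q \<Longrightarrow> qpow q (s + of_nat k) = qpow q s * complex_of_real q ^ k"
proof -
  assume q: "0 < q"
  have "exp (of_nat k * complex_of_real (ln q)) = exp (complex_of_real (ln q)) ^ k"
    by (rule exp_of_nat_mult)
  also have "exp (complex_of_real (ln q)) = complex_of_real q"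
    using q by (simp add: exp_of_real)
  finally show ?thesis unfolding qpow_def by (simp add: distrib_right exp_add)
qed

lemma qpow_minus: "qpow q (- s) = inverse (qpow q s)"
  unfolding qpow_def by (simp add: exp_minus)

lemma qpow_add: "qpow q (s + t) = qpow q s * qpow q t"
  unfolding qpow_def by (simp add: distrib_right exp_add)

lemma qpow_nz: "qpow q s \<noteq> 0"
  unfolding qpow_def by simp

lemma summable_phi:
  fixes q :: real and b z :: complex
  assumes q0: "0<q" and q1: "q<1" and bq: "\<And>j. b * of_real q ^ j \<noteq> 1"
  shows "summable (\<lambda>k. complex_of_real (q ^ (k * (k - 1))) /
      (qpoch (of_real q) (of_real q) k * qpoch b (of_real q) k) * z ^ k)"
    (is "summable ?a")
proof -
  define Q where "Q = complex_of_real q"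
  define r where "r = (\<lambda>k. Q^(2*k) * z / ((1 - Q^Suc k) * (1 - b*Q^k)))"
  have z: "(\<lambda>k. Q^k) \<longlonglongrightarrow> 0" using q0 q1 unfolding Q_def by (intro LIMSEQ_power_zero) simp
  have n2: "norm (Q^2) < 1" using q0 q1 by (simp add: Q_def norm_power abs_square_less_1)
  have z2: "(\<lambda>k. Q^(2*k)) \<longlonglongrightarrow> 0"
    using LIMSEQ_power_zero[OF n2] by (simp add: power_mult)
  have "r \<longlonglongrightarrow> 0 * z / ((1 - 0) * (1 - b*0))"
    unfolding r_def by (intro tendsto_intros z2 z LIMSEQ_Suc[OF z]) simp
  then have "r \<longlonglongrightarrow> 0" by simp
  then have "eventually (\<lambda>k. norm (r k) < 1/2) sequentially"
    using order_tendstoD(2)[OF tendsto_norm_zero, of r sequentially "1/2"] by simp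
  then obtain N where N: "\<And>k. k \<ge> N \<Longrightarrow> norm (r k) < 1/2" by (auto simp: eventually_sequentially)
  have rec: "?a (Suc k) = r k * ?a k" for k
  proof -
    have e: "Suc k * (Suc k - 1) = k * (k - 1) + 2 * k" by (cases k) auto
    have nz: "qpoch Q Q k \<noteq> 0" "qpoch b Q k \<noteq> 0" "1 - Q^Suc k \<noteq> 0" "1 - b*Q^k \<noteq> 0"
      using qpoch_Q_nz[OF q0 q1 bq, of k] qpoch_b_nz[OF q0 q1 bq, of 0 k] Qpow_ne1[OF q0 q1 bq, of k] bq[of k]
      by (auto simp: Q_def)
    have qs: "qpoch Q Q (Suc k) = qpoch Q Q k * (1 - Q^Suc k)" "qpoch b Q (Suc k) = qpoch b Q k * (1 - b*Q^k)"
      by (simp_all add: qpoch_Suc)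
    have pw: "complex_of_real (q^(Suc k*(Suc k - 1))) = Q^(k*(k-1))*Q^(2*k)"
      by (simp only: of_real_power of_real_mult e power_add Q_def)
    have pw0: "complex_of_real (q^(k*(k - 1))) = Q^(k*(k-1))"
      by (simp only: of_real_power Q_def)
    have gen: "T*X/((P*U)*(R*V)) * (z*Z) = X*z/(U*V) * (T/(P*R)*Z)"
      if "P \<noteq> 0" "R \<noteq> 0" "U \<noteq> 0" "V \<noteq> 0" for T X P U R V Z :: complex
      using that by (simp add: field_simps)
    have "?a (Suc k) = Q^(k*(k-1))*Q^(2*k)/((qpoch Q Q k*(1-Q^Suc k))*(qpoch b Q k*(1-b*Q^k))) * (z*z^k)"
      unfolding pw Q_def[symmetric] qs by simp
    also have "\<dots> = r k * ?a k"
      unfolding r_def pw0 Q_def[symmetric] by (rule gen[OF nz])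
    finally show ?thesis .
  qed
  show ?thesis
  proof (rule summable_ratio_test[where c="1/2" and N=N])
    fix n assume "n \<ge> N"
    then show "norm (?a (Suc n)) \<le> 1/2 * norm (?a n)"
      unfolding rec norm_mult using N[of n] by (intro mult_right_mono) auto
  qed simp
qed

theorem mainTheorem6:
  fixes q :: real and w \<nu> :: complex
  assumes "0 < q" and "q < 1"
    and "\<forall>k::nat. qpow q (\<nu> + of_nat k) \<noteq> 1"
  shows "frakF (\<lambda>k. w / (qpow q (- (\<nu> + of_nat k) / 2) - qpow q ((\<nu> + of_nat k) / 2)))
         = phi01 (qpow q \<nu>) q (- qpow q (\<nu> + 1/2) * w ^ 2)"
proof -
  note q0 = assms(1) and q1 = assms(2)
  define Q where "Q = complex_of_real q"
  define b where "b = qpow q \<nu>"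
  define B where "B = w^2 * qpow q (\<nu> + 1/2)"
  define x where "x = (\<lambda>k. w / (qpow q (- (\<nu> + of_nat k) / 2) - qpow q ((\<nu> + of_nat k) / 2)))"
  have bQ: "qpow q (\<nu> + of_nat k) = b * Q^k" for k
    unfolding b_def Q_def by (rule qpow_add_nat[OF q0])
  have bq: "b * of_real q ^ j \<noteq> 1" for j
    using assms(3) bQ[of j] unfolding Q_def by auto
  define h where "h = (\<lambda>k::nat. qpow q ((\<nu> + of_nat k) / 2))"
  have h2: "h k * h k = b * Q^k" for k
    unfolding h_def bQ[symmetric] qpow_add[symmetric] by simp
  have hh: "h k * h (Suc k) = qpow q (\<nu> + 1/2) * Q^k" for k
  proof -
    have "h k * h (Suc k) = qpow q ((\<nu> + 1/2) + of_nat k)"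
    proof -
      have "(\<nu> + of_nat k) / 2 + (\<nu> + of_nat (Suc k)) / 2 = (\<nu> + 1/2) + of_nat k"
        by (simp add: field_simps)
      then show ?thesis unfolding h_def qpow_add[symmetric] by simp
    qed
    then show ?thesis unfolding Q_def by (simp add: qpow_add_nat[OF q0])
  qed
  have xk: "x k = w * h k / (1 - b * Q^k)" for k
  proof -
    have hn: "h k \<noteq> 0" unfolding h_def by (rule qpow_nz)
    have "qpow q (- (\<nu> + of_nat k) / 2) = inverse (h k)"
    proof -
      have "- (\<nu> + of_nat k) / 2 = - ((\<nu> + of_nat k) / 2)" by (simp only: minus_divide_left)
      then show ?thesis unfolding h_def qpow_minus[symmetric] by metis
    qed
    then have "x k = w / (inverse (h k) - h k)" unfolding x_def h_def by simp
    also have "\<dots> = w * h k / (1 - h k * h k)" using hn by (simp add: field_simps)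
    finally show ?thesis unfolding h2 .
  qed
  have xc: "(\<lambda>k. x k * x (Suc k)) = cc Q b B"
  proof
    fix k
    have "x k * x (Suc k) = w^2 * (h k * h (Suc k)) / ((1 - b*Q^k) * (1 - b*Q^Suc k))"
      unfolding xk by (simp add: power2_eq_square)
    then show "x k * x (Suc k) = cc Q b B k" unfolding hh cc_def B_def by (simp add: mult_ac)
  qed
  have T: "infsum (\<lambda>ks. \<Prod>k\<leftarrow>ks. x k * x (Suc k)) (adm_idx (Suc m)) = GG Q b B (Suc m) 0" for m
  proof -
    have "infsum (\<lambda>ks. \<Prod>k\<leftarrow>ks. x k * x (Suc k)) (adm_idx (Suc m)) =
          infsum (\<lambda>ks. prod_list (map (cc Q b B) ks)) (L (Suc m) 0)"
      unfolding adm_L xc ..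
    also have "\<dots> = GG Q b B (Suc m) 0"
      using main_ind[OF q0 q1 bq, of B "Suc m" 0] unfolding Q_def by (auto intro: infsumI)
    finally show ?thesis .
  qed
  define a where "a = (\<lambda>k. complex_of_real (q ^ (k * (k - 1))) /
      (qpoch (of_real q) (of_real q) k * qpoch b (of_real q) k) * (-B) ^ k)"
  have sa: "summable a" unfolding a_def by (rule summable_phi[OF q0 q1 bq])
  have a0: "a 0 = 1" by (simp add: a_def qpoch_def)
  have aS: "a (Suc m) = (-1)^Suc m * GG Q b B (Suc m) 0" for m
    unfolding a_def GG_def Q_def
    by (simp add: of_real_power power_mult_distrib[symmetric] del: power_Suc)
  have "phi01 (qpow q \<nu>) q (- qpow q (\<nu> + 1/2) * w ^ 2) = suminf a"
    unfolding phi01_def a_def b_def B_def by (simp add: mult_ac)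
  also have "\<dots> = 1 + (\<Sum>m. a (Suc m))" using suminf_split_head[OF sa] a0 by simp
  also have "\<dots> = frakF x" unfolding frakF_def T aS ..
  finally show ?thesis unfolding x_def ..
qed


end
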